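(* There exists a centrally essential ring containing a maximal right ideal which is not a two-sided ideal.
   Context: All rings are associative, unital and non-zero. $Z(A)$ denotes the center of a ring $A$. A ring $A$ is centrally essential if either $A$ is commutative or for every non-central element $a\in A$ there exist non-zero central elements $x,y\in Z(A)$ with $ax=y$. *)

theory Defs
  imports "HOL-Algebra.Ring" "HOL-Algebra.Ideal"
begin

definition ring_center :: "('a, 'b) ring_scheme \<Rightarrow> 'a set" where
  "ring_center R = {z \<in> carrier R. \<forall>a \<in> carrier R. z \<otimes>\<^bsub>R\<^esub> a = a \<otimes>\<^bsub>R\<^esub> z}"

definition centrally_essential :: "('a, 'b) ring_scheme \<Rightarrow> bool" where
  "centrally_essential R \<longleftrightarrow> ring R \<and>
     ((\<forall>a \<in> carrier R. \<forall>b \<in> carrier R. a \<otimes>\<^bsub>R\<^esub> b = b \<otimes>\<^bsub>R\<^esub> a) \<or>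
      (\<forall>a \<in> carrier R. a \<notin> ring_center R \<longrightarrow>
         (\<exists>x \<in> ring_center R. \<exists>y \<in> ring_center R.
            x \<noteq> \<zero>\<^bsub>R\<^esub> \<and> y \<noteq> \<zero>\<^bsub>R\<^esub> \<and> a \<otimes>\<^bsub>R\<^esub> x = y)))"

definition right_ideal :: "'a set \<Rightarrow> ('a, 'b) ring_scheme \<Rightarrow> bool" where
  "right_ideal I R \<longleftrightarrow> additive_subgroup I R \<and>
     (\<forall>a \<in> I. \<forall>r \<in> carrier R. a \<otimes>\<^bsub>R\<^esub> r \<in> I)"

definition maximal_right_ideal :: "'a set \<Rightarrow> ('a, 'b) ring_scheme \<Rightarrow> bool" where
  "maximal_right_ideal I R \<longleftrightarrow> right_ideal I R \<and> I \<noteq> carrier R \<and>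
     (\<forall>J. right_ideal J R \<and> I \<subseteq> J \<longrightarrow> J = I \<or> J = carrier R)"

end

theory Submission
  imports Defs "HOL-Library.Countable_Set"
begin


datatype m2 = M int int int int

fun madd :: "m2 \<Rightarrow> m2 \<Rightarrow> m2" where
  "madd (M a b c d) (M e f g h) = M (a+e) (b+f) (c+g) (d+h)"
fun mneg :: "m2 \<Rightarrow> m2" where
  "mneg (M a b c d) = M (-a) (-b) (-c) (-d)"
fun mmul :: "m2 \<Rightarrow> m2 \<Rightarrow> m2" where
  "mmul (M a b c d) (M e f g h) = M (a*e+b*g) (a*f+b*h) (c*e+d*g) (c*f+d*h)"
fun mmod :: "int \<Rightarrow> m2 \<Rightarrow> m2" where
  "mmod m (M a b c d) = M (a mod m) (b mod m) (c mod m) (d mod m)"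
fun scal2 :: "m2 \<Rightarrow> bool" where
  "scal2 (M a b c d) = (even b \<and> even c \<and> even (a - d))"

definition mzero where "mzero = M 0 0 0 0"
definition mone where "mone = M 1 0 0 1"

lemma modh1[simp]: "((a mod m) * y + (b mod m) * z) mod m = ((a::int)*y + b*z) mod m"
proof -
  have "((a mod m) * y + (b mod m) * z) mod m = (((a mod m)*y) mod m + ((b mod m)*z) mod m) mod m"
    by (rule mod_add_eq[symmetric])
  also have "\<dots> = ((a*y) mod m + (b*z) mod m) mod m" by (simp only: mod_mult_left_eq)
  also have "\<dots> = (a*y+b*z) mod m" by (rule mod_add_eq)
  finally show ?thesis .
qed
lemma modh2[simp]: "(y * (a mod m) + z * (b mod m)) mod m = (y*(a::int) + z*b) mod m"
proof -
  have "(y * (a mod m) + z * (b mod m)) mod m = ((y*(a mod m)) mod m + (z*(b mod m)) mod m) mod m"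
    by (rule mod_add_eq[symmetric])
  also have "\<dots> = ((y*a) mod m + (z*b) mod m) mod m" by (simp only: mod_mult_right_eq)
  also have "\<dots> = (y*a+z*b) mod m" by (rule mod_add_eq)
  finally show ?thesis .
qed
lemma mmod_mmod[simp]: "mmod m (mmod m X) = mmod m X"
  by (cases X) (simp only: mmod.simps mod_mod_trivial)
lemma mmod_mul_l[simp]: "mmod m (mmul (mmod m X) Y) = mmod m (mmul X Y)"
  by (cases X; cases Y) (simp only: mmod.simps mmul.simps modh1)
lemma mmod_mul_r[simp]: "mmod m (mmul X (mmod m Y)) = mmod m (mmul X Y)"
  by (cases X; cases Y) (simp only: mmod.simps mmul.simps modh2)
lemma mmod_add_l[simp]: "mmod m (madd (mmod m X) Y) = mmod m (madd X Y)"
  by (cases X; cases Y) (simp only: mmod.simps madd.simps mod_add_left_eq)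
lemma mmod_add_r[simp]: "mmod m (madd X (mmod m Y)) = mmod m (madd X Y)"
  by (cases X; cases Y) (simp only: mmod.simps madd.simps mod_add_right_eq)
lemma mmod_neg[simp]: "mmod m (mneg (mmod m X)) = mmod m (mneg X)"
  by (cases X) (simp only: mmod.simps mneg.simps mod_minus_eq)

lemma mmul_assoc: "mmul (mmul X Y) Z = mmul X (mmul Y Z)"
  by (cases X; cases Y; cases Z) (simp add: algebra_simps)
lemma madd_assoc: "madd (madd X Y) Z = madd X (madd Y Z)"
  by (cases X; cases Y; cases Z) (simp add: algebra_simps)
lemma madd_comm: "madd X Y = madd Y X"
  by (cases X; cases Y) (simp add: algebra_simps)
lemma madd_zero[simp]: "madd mzero X = X" "madd X mzero = X"
  by (cases X, simp add: mzero_def)+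
lemma mmul_one[simp]: "mmul mone X = X" "mmul X mone = X"
  by (cases X, simp add: mone_def)+
lemma madd_neg: "madd (mneg X) X = mzero"
  by (cases X) (simp add: mzero_def)
lemma mdistr_l: "mmul (madd X Y) Z = madd (mmul X Z) (mmul Y Z)"
  by (cases X; cases Y; cases Z) (simp add: algebra_simps)
lemma mdistr_r: "mmul Z (madd X Y) = madd (mmul Z X) (mmul Z Y)"
  by (cases X; cases Y; cases Z) (simp add: algebra_simps)
lemma mmod_zero[simp]: "mmod m mzero = mzero"
  by (simp add: mzero_def)

lemma scal2_alt: "scal2 (M a b c d) = (even b \<and> even c \<and> even (a - d))"
  by simp

lemma scal2_mul: "scal2 X \<Longrightarrow> scal2 Y \<Longrightarrow> scal2 (mmul X Y)"
proof (cases X; cases Y)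
  fix a b c d e f g h assume X: "X = M a b c d" and Y: "Y = M e f g h"
    and s: "scal2 X" "scal2 Y"
  from s X Y have h: "even b" "even c" "even (a-d)" "even f" "even g" "even (e-h)"
    by (auto simp: scal2_alt)
  have e1: "a*e+b*g - (c*f+d*h) = (a-d)*e + d*(e-h) + b*g - c*f" by (simp add: algebra_simps)
  have "even (a*e+b*g - (c*f+d*h))" unfolding e1 using h by simp
  moreover have "even (a*f+b*h)" "even (c*e+d*g)" using h by auto
  ultimately show ?thesis using X Y by (simp add: scal2_alt)
qed

lemma scal2_add: "scal2 X \<Longrightarrow> scal2 Y \<Longrightarrow> scal2 (madd X Y)"
proof (cases X; cases Y)
  fix a b c d e f g h assume X: "X = M a b c d" and Y: "Y = M e f g h"
    and s: "scal2 X" "scal2 Y"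
  have e1: "a + e - (d + h) = (a - d) + (e - h)" by simp
  show ?thesis using s X Y by (simp add: scal2_alt e1)
qed
lemma scal2_neg: "scal2 X \<Longrightarrow> scal2 (mneg X)"
proof (cases X)
  fix a b c d assume X: "X = M a b c d" and s: "scal2 X"
  have e1: "- a - - d = - (a - d)" by simp
  show ?thesis using s X by (simp add: scal2_alt e1 del: minus_diff_eq)
qed
lemma even_mod2k: "k > 0 \<Longrightarrow> even ((x::int) mod 2 ^ k) = even x"
proof -
  assume k: "k > 0"
  have "(2::int) dvd 2 ^ k" using k by (simp add: dvd_power)
  then have "(x::int) mod 2 ^ k mod 2 = x mod 2" by (rule mod_mod_cancel)
  then show ?thesis by (simp add: even_iff_mod_2_eq_zero)
qed
lemma even_mod2k_diff: "k > 0 \<Longrightarrow> even ((x::int) mod 2 ^ k - y mod 2^k) = even (x - y)"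
  by (simp add: even_mod2k)
lemma scal2_mmod: "scal2 X \<Longrightarrow> scal2 (mmod (2^k) X)"
proof (cases X)
  fix a b c d assume X: "X = M a b c d" and s: "scal2 X"
  show ?thesis
  proof (cases "k = 0")
    case True then show ?thesis using X by simp
  next
    case False then have k: "k > 0" by simp
    show ?thesis using X s by (simp only: mmod.simps scal2.simps even_mod2k[OF k] even_mod2k_diff[OF k])
  qed
qed
lemma scal2_zero[simp]: "scal2 mzero" and scal2_one[simp]: "scal2 mone"
  by (auto simp: mzero_def mone_def)

type_synonym elt = "m2 \<times> (nat \<Rightarrow> m2)"
definition md :: "nat \<Rightarrow> m2 \<Rightarrow> m2" where "md k = mmod (2^k)"

lemma md_simps[simp]: "md k (md k X) = md k X"
  "md k (mmul (md k X) Y) = md k (mmul X Y)" "md k (mmul X (md k Y)) = md k (mmul X Y)"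
  "md k (madd (md k X) Y) = md k (madd X Y)" "md k (madd X (md k Y)) = md k (madd X Y)"
  "md k (mneg (md k X)) = md k (mneg X)" "md k mzero = mzero"
  by (simp_all add: md_def)
lemma scal2_md: "scal2 X \<Longrightarrow> scal2 (md k X)" by (simp add: md_def scal2_mmod)

definition carr :: "elt set" where
  "carr = {(A,h). scal2 A \<and> (\<forall>k. scal2 (h k) \<and> md k (h k) = h k) \<and> finite {k. h k \<noteq> md k A}}"

definition R0 :: "elt ring" where
 "R0 = \<lparr>carrier = carr,
        mult = (\<lambda>x y. (mmul (fst x) (fst y), \<lambda>k. md k (mmul (snd x k) (snd y k)))),
        one = (mone, \<lambda>k. md k mone), zero = (mzero, \<lambda>k. mzero),
        add = (\<lambda>x y. (madd (fst x) (fst y), \<lambda>k. md k (madd (snd x k) (snd y k))))\<rparr>"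

lemma R0_simps: "carrier R0 = carr"
  "mult R0 (A,h) (B,g) = (mmul A B, \<lambda>k. md k (mmul (h k) (g k)))"
  "add R0 (A,h) (B,g) = (madd A B, \<lambda>k. md k (madd (h k) (g k)))"
  "one R0 = (mone, \<lambda>k. md k mone)" "zero R0 = (mzero, \<lambda>k. mzero)"
  by (simp_all add: R0_def)

lemma carrD: "(A,h) \<in> carr \<Longrightarrow> scal2 A \<and> scal2 (h k) \<and> md k (h k) = h k"
  by (simp add: carr_def)
lemma carr_fin: "(A,h) \<in> carr \<Longrightarrow> finite {k. h k \<noteq> md k A}"
  by (simp add: carr_def)

lemma carr_mult: assumes "(A,h) \<in> carr" "(B,g) \<in> carr"
  shows "(mmul A B, \<lambda>k. md k (mmul (h k) (g k))) \<in> carr"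
proof -
  have "{k. md k (mmul (h k) (g k)) \<noteq> md k (mmul A B)} \<subseteq> {k. h k \<noteq> md k A} \<union> {k. g k \<noteq> md k B}"
    by auto
  then have "finite {k. md k (mmul (h k) (g k)) \<noteq> md k (mmul A B)}"
    using carr_fin[OF assms(1)] carr_fin[OF assms(2)] by (meson finite_UnI finite_subset)
  then show ?thesis using carrD[OF assms(1)] carrD[OF assms(2)]
    by (auto simp: carr_def scal2_mul scal2_md)
qed

lemma carr_add: assumes "(A,h) \<in> carr" "(B,g) \<in> carr"
  shows "(madd A B, \<lambda>k. md k (madd (h k) (g k))) \<in> carr"
proof -
  have "{k. md k (madd (h k) (g k)) \<noteq> md k (madd A B)} \<subseteq> {k. h k \<noteq> md k A} \<union> {k. g k \<noteq> md k B}"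
    by auto
  then have "finite {k. md k (madd (h k) (g k)) \<noteq> md k (madd A B)}"
    using carr_fin[OF assms(1)] carr_fin[OF assms(2)] by (meson finite_UnI finite_subset)
  then show ?thesis using carrD[OF assms(1)] carrD[OF assms(2)]
    by (auto simp: carr_def scal2_add scal2_md)
qed

lemma carr_neg: assumes "(A,h) \<in> carr"
  shows "(mneg A, \<lambda>k. md k (mneg (h k))) \<in> carr"
proof -
  have "{k. md k (mneg (h k)) \<noteq> md k (mneg A)} \<subseteq> {k. h k \<noteq> md k A}"
    by auto
  then have "finite {k. md k (mneg (h k)) \<noteq> md k (mneg A)}"
    using carr_fin[OF assms(1)] by (meson finite_subset)
  then show ?thesis using carrD[OF assms(1)]
    by (auto simp: carr_def scal2_neg scal2_md)
qed

lemma carr_one: "(mone, \<lambda>k. md k mone) \<in> carr"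
  by (simp add: carr_def scal2_md)
lemma carr_zero: "(mzero, \<lambda>k. mzero) \<in> carr"
  by (simp add: carr_def)

lemma ring_R0: "ring R0"
proof (rule ringI)
  show "abelian_group R0"
  proof (rule abelian_groupI)
    fix x y assume "x \<in> carrier R0" "y \<in> carrier R0"
    then show "x \<oplus>\<^bsub>R0\<^esub> y \<in> carrier R0"
      by (cases x; cases y) (simp add: R0_simps carr_add)
  next
    show "\<zero>\<^bsub>R0\<^esub> \<in> carrier R0" by (simp add: R0_simps carr_zero)
  next
    fix x y z assume "x \<in> carrier R0" "y \<in> carrier R0" "z \<in> carrier R0"
    then show "(x \<oplus>\<^bsub>R0\<^esub> y) \<oplus>\<^bsub>R0\<^esub> z = x \<oplus>\<^bsub>R0\<^esub> (y \<oplus>\<^bsub>R0\<^esub> z)"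
      by (cases x; cases y; cases z) (simp add: R0_simps madd_assoc)
  next
    fix x y assume "x \<in> carrier R0" "y \<in> carrier R0"
    then show "x \<oplus>\<^bsub>R0\<^esub> y = y \<oplus>\<^bsub>R0\<^esub> x"
      by (cases x; cases y) (simp add: R0_simps madd_comm)
  next
    fix x assume "x \<in> carrier R0"
    then show "\<zero>\<^bsub>R0\<^esub> \<oplus>\<^bsub>R0\<^esub> x = x"
      by (cases x) (auto simp: R0_simps carr_def)
  next
    fix x assume x: "x \<in> carrier R0"
    obtain A h where xe: "x = (A,h)" by (cases x)
    have "(mneg A, \<lambda>k. md k (mneg (h k))) \<in> carrier R0" using x xe carr_neg by (simp add: R0_simps)
    moreover have "(mneg A, \<lambda>k. md k (mneg (h k))) \<oplus>\<^bsub>R0\<^esub> x = \<zero>\<^bsub>R0\<^esub>"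
      by (simp add: xe R0_simps madd_neg)
    ultimately show "\<exists>y\<in>carrier R0. y \<oplus>\<^bsub>R0\<^esub> x = \<zero>\<^bsub>R0\<^esub>" by blast
  qed
next
  show "monoid R0"
  proof (rule monoidI)
    fix x y assume "x \<in> carrier R0" "y \<in> carrier R0"
    then show "x \<otimes>\<^bsub>R0\<^esub> y \<in> carrier R0"
      by (cases x; cases y) (simp add: R0_simps carr_mult)
  next
    show "\<one>\<^bsub>R0\<^esub> \<in> carrier R0" by (simp add: R0_simps carr_one)
  next
    fix x y z assume "x \<in> carrier R0" "y \<in> carrier R0" "z \<in> carrier R0"
    then show "(x \<otimes>\<^bsub>R0\<^esub> y) \<otimes>\<^bsub>R0\<^esub> z = x \<otimes>\<^bsub>R0\<^esub> (y \<otimes>\<^bsub>R0\<^esub> z)"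
      by (cases x; cases y; cases z) (simp add: R0_simps mmul_assoc)
  next
    fix x assume "x \<in> carrier R0"
    then show "\<one>\<^bsub>R0\<^esub> \<otimes>\<^bsub>R0\<^esub> x = x"
      by (cases x) (auto simp: R0_simps carr_def)
  next
    fix x assume "x \<in> carrier R0"
    then show "x \<otimes>\<^bsub>R0\<^esub> \<one>\<^bsub>R0\<^esub> = x"
      by (cases x) (auto simp: R0_simps carr_def)
  qed
next
  fix x y z assume "x \<in> carrier R0" "y \<in> carrier R0" "z \<in> carrier R0"
  then show "(x \<oplus>\<^bsub>R0\<^esub> y) \<otimes>\<^bsub>R0\<^esub> z = x \<otimes>\<^bsub>R0\<^esub> z \<oplus>\<^bsub>R0\<^esub> y \<otimes>\<^bsub>R0\<^esub> z"
    by (cases x; cases y; cases z) (simp add: R0_simps mdistr_l)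
next
  fix x y z assume "x \<in> carrier R0" "y \<in> carrier R0" "z \<in> carrier R0"
  then show "z \<otimes>\<^bsub>R0\<^esub> (x \<oplus>\<^bsub>R0\<^esub> y) = z \<otimes>\<^bsub>R0\<^esub> x \<oplus>\<^bsub>R0\<^esub> z \<otimes>\<^bsub>R0\<^esub> y"
    by (cases x; cases y; cases z) (simp add: R0_simps mdistr_r)
qed



definition sc :: "int \<Rightarrow> m2" where "sc n = M n 0 0 n"

lemma sc_comm: "mmul (sc n) Y = mmul Y (sc n)"
  by (cases Y) (simp add: sc_def algebra_simps)
lemma scal2_sc[simp]: "scal2 (sc n)" by (simp add: sc_def)
lemma mmul_zero[simp]: "mmul X mzero = mzero" "mmul mzero X = mzero"
  by (cases X, simp add: mzero_def)+

lemma mmod_eq_iff: "mmod m (M a b c d) = mmod m (M a' b' c' d') \<longleftrightarrow>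
   m dvd (a - a') \<and> m dvd (b - b') \<and> m dvd (c - c') \<and> m dvd (d - d')"
  by (simp add: mod_eq_dvd_iff)

lemma F1:
  fixes a b c d :: int
  assumes Q: "2^k dvd 2^(j+1)*b" "2^k dvd 2^(j+1)*c" "(2::int)^k dvd 2^(j+1)*(a-d)"
    and sM: "scal2 Mx"
  shows "md k (mmul (mmul (M a b c d) (sc (2^j))) Mx) = md k (mmul Mx (mmul (M a b c d) (sc (2^j))))"
proof (cases Mx)
  fix e f g h assume Me: "Mx = M e f g h"
  from sM Me have "even f" "even g" "even (e-h)" by auto
  then obtain f' g' w where f: "f = 2*f'" and g: "g = 2*g'" and w: "e - h = 2*w"
    by (metis evenE)
  have he: "e = h + 2*w" using w by simp
  let ?p = "(2::int)^j"
  have p2: "(2::int)^(j+1) = 2 * ?p" by simp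
  have e11: "(a * ?p * e + b * ?p * g) - (e * (a * ?p) + f * (c * ?p)) = 2^(j+1)*b*g' - 2^(j+1)*c*f'"
    unfolding p2 f g by (simp add: algebra_simps)
  have e12: "(a * ?p * f + b * ?p * h) - (e * (b * ?p) + f * (d * ?p)) = 2^(j+1)*(a-d)*f' - 2^(j+1)*b*w"
    unfolding p2 f he by (simp add: algebra_simps)
  have e21: "(c * ?p * e + d * ?p * g) - (g * (a * ?p) + h * (c * ?p)) = 2^(j+1)*c*w - 2^(j+1)*(a-d)*g'"
    unfolding p2 g he by (simp add: algebra_simps)
  have e22: "(c * ?p * f + d * ?p * h) - (g * (b * ?p) + h * (d * ?p)) = 2^(j+1)*c*f' - 2^(j+1)*b*g'"
    unfolding p2 f g by (simp add: algebra_simps)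
  have d1: "2^k dvd 2^(j+1)*b*x" "2^k dvd 2^(j+1)*c*x" "(2::int)^k dvd 2^(j+1)*(a-d)*x" for x
    using Q by (simp_all add: dvd_mult2)
  show ?thesis unfolding Me md_def
    by (simp only: sc_def mmul.simps mult_zero_right mult_zero_left add_0_right add_0_left mmod_eq_iff e11 e12 e21 e22)
       (intro conjI dvd_diff d1)
qed

definition Qp :: "nat \<Rightarrow> int \<Rightarrow> int \<Rightarrow> int \<Rightarrow> int \<Rightarrow> nat \<Rightarrow> bool" where
  "Qp k a b c d j \<longleftrightarrow> (2::int)^k dvd 2^j*b \<and> (2::int)^k dvd 2^j*c \<and> (2::int)^k dvd 2^j*(a-d)"

lemma Qp_k: "Qp k a b c d k" by (simp add: Qp_def)
lemma Qp_mono: "Qp k a b c d j \<Longrightarrow> Qp k a b c d (Suc j)"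
proof -
  have e: "(2::int)^(Suc j)*x = (2^j*x)*2" for x by simp
  assume "Qp k a b c d j"
  then show ?thesis unfolding Qp_def e by (simp add: dvd_mult2)
qed

lemma F2:
  assumes "md k (mmul (M a b c d) (sc (2^j))) = mzero"
  shows "Qp k a b c d j"
proof -
  have "md k (mmul (M a b c d) (sc (2^j))) = mmod (2^k) (M (2^j*a) (2^j*b) (2^j*c) (2^j*d))"
    by (simp add: md_def sc_def mult.commute)
  moreover have "mzero = mmod (2^k) (M 0 0 0 0)" by (simp add: mzero_def)
  ultimately have "mmod (2^k) (M (2^j*a) (2^j*b) (2^j*c) (2^j*d)) = mmod (2^k) (M 0 0 0 0)"
    using assms by simp
  then have "(2::int)^k dvd 2^j*a \<and> 2^k dvd 2^j*b \<and> 2^k dvd 2^j*c \<and> 2^k dvd 2^j*d"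
    by (simp only: mmod_eq_iff diff_0_right)
  then show ?thesis unfolding Qp_def by (simp add: right_diff_distrib dvd_diff)
qed

lemma comp_helper:
  assumes sX: "scal2 X" and nc: "scal2 Mx" "md k (mmul X Mx) \<noteq> md k (mmul Mx X)"
  shows "\<exists>j<k. (\<forall>N. scal2 N \<longrightarrow> md k (mmul (mmul X (sc (2^j))) N) = md k (mmul N (mmul X (sc (2^j)))))
      \<and> md k (mmul X (sc (2^j))) \<noteq> mzero"
proof (cases X)
  fix a b c d assume Xe: "X = M a b c d"
  have central: "\<And>j N. Qp k a b c d (Suc j) \<Longrightarrow> scal2 N \<Longrightarrow>
     md k (mmul (mmul X (sc (2^j))) N) = md k (mmul N (mmul X (sc (2^j))))"
    unfolding Xe by (rule F1) (simp_all add: Qp_def)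
  have nQ1: "\<not> Qp k a b c d 1"
  proof
    assume "Qp k a b c d 1"
    then have "md k (mmul (mmul X (sc (2^0))) Mx) = md k (mmul Mx (mmul X (sc (2^0))))"
      using central[of 0 Mx] nc(1) by simp
    moreover have "mmul X (sc (2^0)) = X" by (simp add: Xe sc_def)
    ultimately show False using nc(2) by simp
  qed
  define j0 where "j0 = (LEAST j. Qp k a b c d j)"
  have Qj0: "Qp k a b c d j0" unfolding j0_def by (rule LeastI[of _ k]) (rule Qp_k)
  have j0k: "j0 \<le> k" unfolding j0_def by (rule Least_le) (rule Qp_k)
  have j0pos: "j0 \<noteq> 0"
  proof
    assume "j0 = 0"
    then have "Qp k a b c d 0" using Qj0 by simp
    then have "Qp k a b c d 1" using Qp_mono[of k a b c d 0] by simp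
    then show False using nQ1 by simp
  qed
  define j where "j = j0 - 1"
  have jj: "Suc j = j0" using j0pos unfolding j_def by simp
  have nQj: "\<not> Qp k a b c d j"
  proof
    assume "Qp k a b c d j"
    then have "j0 \<le> j" unfolding j0_def by (rule Least_le)
    then show False using jj by simp
  qed
  have "j < k" using jj j0k by simp
  moreover have "\<forall>N. scal2 N \<longrightarrow> md k (mmul (mmul X (sc (2^j))) N) = md k (mmul N (mmul X (sc (2^j))))"
    using central Qj0 jj by simp
  moreover have "md k (mmul X (sc (2^j))) \<noteq> mzero"
    using F2[of k a b c d j] nQj Xe by blast
  ultimately show ?thesis by blast
qed



lemma fin1: assumes "u \<noteq> (v::int)" shows "finite {k. u mod 2^k = v mod 2^k}"
proof -
  have "{k. u mod 2^k = v mod 2^k} \<subseteq> {..nat \<bar>u - v\<bar>}"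
  proof
    fix k assume "k \<in> {k. u mod 2^k = v mod 2^k}"
    then have "(2::int)^k dvd (u - v)" by (simp add: mod_eq_dvd_iff)
    then have "\<bar>(2::int)^k\<bar> \<le> \<bar>u - v\<bar>" using assms by (intro dvd_imp_le_int) auto
    moreover have "int k < 2^k"
    proof -
      have "k < 2^k" by (rule less_exp)
      then have "int k < int (2^k)" by (simp only: of_nat_less_iff)
      then show ?thesis by simp
    qed
    ultimately have "int k \<le> \<bar>u - v\<bar>" by linarith
    then show "k \<in> {..nat \<bar>u - v\<bar>}" by simp
  qed
  then show ?thesis by (rule finite_subset) simp
qed

lemma finite_md_eq: assumes "D \<noteq> E" shows "finite {k. md k D = md k E}"
proof (cases D; cases E)
  fix a b c d a' b' c' d' assume De: "D = M a b c d" and Ee: "E = M a' b' c' d'"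
  have "{k. md k D = md k E} \<subseteq> {k. a mod 2^k = a' mod 2^k} \<inter> {k. b mod 2^k = b' mod 2^k}
     \<inter> {k. c mod 2^k = c' mod 2^k} \<inter> {k. d mod 2^k = d' mod 2^k}"
    by (auto simp: De Ee md_def)
  moreover have "a \<noteq> a' \<or> b \<noteq> b' \<or> c \<noteq> c' \<or> d \<noteq> d'" using assms De Ee by auto
  ultimately show ?thesis using fin1 by (meson finite_Int finite_subset)
qed

lemma noncentral_comp:
  assumes a: "(A,h) \<in> carr" and nc: "(A,h) \<notin> ring_center R0"
  shows "\<exists>k Mx. scal2 Mx \<and> md k (mmul (h k) Mx) \<noteq> md k (mmul Mx (h k))"
proof -
  from nc a obtain b where b: "b \<in> carr" and ne: "mult R0 (A,h) b \<noteq> mult R0 b (A,h)"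
    by (auto simp: ring_center_def R0_simps)
  obtain B g where be: "b = (B,g)" by (cases b)
  show ?thesis
  proof (cases "mmul A B = mmul B A")
    case False
    let ?T = "{k. md k (mmul A B) = md k (mmul B A)} \<union> {k. h k \<noteq> md k A} \<union> {k. g k \<noteq> md k B}"
    have bc: "(B,g) \<in> carr" using b be by simp
    have "finite ?T" using finite_md_eq[OF False] carr_fin[OF a] carr_fin[OF bc] by (intro finite_UnI)
    have "\<exists>k. k \<notin> ?T"
    proof (rule ccontr)
      assume "\<not> (\<exists>k. k \<notin> ?T)"
      then have "UNIV \<subseteq> ?T" by blast
      then show False using \<open>finite ?T\<close> infinite_UNIV_nat finite_subset by blast
    qed
    then obtain k where k: "k \<notin> ?T" by blast
    have hk: "h k = md k A" "g k = md k B" "md k (mmul A B) \<noteq> md k (mmul B A)" using k by simp_all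
    have "md k (mmul (h k) (g k)) \<noteq> md k (mmul (g k) (h k))" unfolding hk(1,2) using hk(3) by simp
    moreover have "scal2 (g k)" using carrD[OF bc] by simp
    ultimately show ?thesis by blast
  next
    case True
    then have "(\<lambda>k. md k (mmul (h k) (g k))) \<noteq> (\<lambda>k. md k (mmul (g k) (h k)))"
      using ne be by (auto simp: R0_simps)
    then obtain k where "md k (mmul (h k) (g k)) \<noteq> md k (mmul (g k) (h k))" by auto
    moreover have "scal2 (g k)" using carrD[of B g] b be by auto
    ultimately show ?thesis by blast
  qed
qed

lemma CE_R0: "centrally_essential R0"
  unfolding centrally_essential_def
proof (intro conjI disjI2 ballI impI)
  show "ring R0" by (rule ring_R0)
next
  fix a assume ac: "a \<in> carrier R0" and nc: "a \<notin> ring_center R0"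
  obtain A h where ae: "a = (A,h)" by (cases a)
  have a: "(A,h) \<in> carr" using ac ae by (simp add: R0_simps)
  obtain k Mx where Mx: "scal2 Mx" "md k (mmul (h k) Mx) \<noteq> md k (mmul Mx (h k))"
    using noncentral_comp[OF a] nc ae by blast
  obtain j where j: "j < k"
    and cent: "\<forall>N. scal2 N \<longrightarrow> md k (mmul (mmul (h k) (sc (2^j))) N) = md k (mmul N (mmul (h k) (sc (2^j))))"
    and nz: "md k (mmul (h k) (sc (2^j))) \<noteq> mzero"
    using comp_helper[OF _ Mx] carrD[OF a] by blast
  define P where "P = md k (sc (2^j))"
  define x where "x = (mzero, \<lambda>i. if i = k then P else mzero)"
  have Pne: "P \<noteq> mzero"
  proof
    assume "P = mzero"
    then have "md k (mmul (h k) P) = mzero" by (simp add: md_def[symmetric])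
    then show False using nz unfolding P_def by simp
  qed
  have xc: "x \<in> carr"
  proof -
    have "{i. (if i = k then P else mzero) \<noteq> md i mzero} \<subseteq> {k}" by auto
    then have "finite {i. (if i = k then P else mzero) \<noteq> md i mzero}" by (rule finite_subset) simp
    then show ?thesis unfolding x_def carr_def P_def by (auto simp: scal2_md)
  qed
  have xcent: "x \<in> ring_center R0"
    unfolding ring_center_def
  proof (intro CollectI conjI ballI)
    show "x \<in> carrier R0" using xc by (simp add: R0_simps)
  next
    fix b assume "b \<in> carrier R0"
    obtain B g where be: "b = (B,g)" by (cases b)
    show "x \<otimes>\<^bsub>R0\<^esub> b = b \<otimes>\<^bsub>R0\<^esub> x"
      unfolding x_def be R0_simps P_def by (auto simp: sc_comm)
  qed
  define y where "y = a \<otimes>\<^bsub>R0\<^esub> x"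
  have ye: "y = (mzero, \<lambda>i. if i = k then md k (mmul (h k) (sc (2^j))) else mzero)"
    unfolding y_def ae x_def R0_simps P_def by auto
  have yc: "y \<in> carr"
  proof -
    have "(mmul A mzero, \<lambda>i. md i (mmul (h i) (if i = k then P else mzero))) \<in> carr"
      using carr_mult[OF a xc[unfolded x_def]] .
    then show ?thesis unfolding y_def ae x_def R0_simps by simp
  qed
  have ycent: "y \<in> ring_center R0"
    unfolding ring_center_def
  proof (intro CollectI conjI ballI)
    show "y \<in> carrier R0" using yc by (simp add: R0_simps)
  next
    fix b assume bc: "b \<in> carrier R0"
    obtain B g where be: "b = (B,g)" by (cases b)
    have sg: "scal2 (g k)" using bc be carrD[of B g] by (auto simp: R0_simps)
    have "md k (mmul (md k (mmul (h k) (sc (2^j)))) (g k)) = md k (mmul (g k) (md k (mmul (h k) (sc (2^j)))))"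
      using cent sg by simp
    then show "y \<otimes>\<^bsub>R0\<^esub> b = b \<otimes>\<^bsub>R0\<^esub> y"
      unfolding ye be R0_simps by auto
  qed
  have xne: "x \<noteq> \<zero>\<^bsub>R0\<^esub>"
  proof
    assume "x = \<zero>\<^bsub>R0\<^esub>"
    then have "(\<lambda>i. if i = k then P else mzero) = (\<lambda>k. mzero)" unfolding x_def R0_simps by simp
    then have "P = mzero" by (metis (mono_tags))
    then show False using Pne by simp
  qed
  have yne: "y \<noteq> \<zero>\<^bsub>R0\<^esub>"
  proof
    assume "y = \<zero>\<^bsub>R0\<^esub>"
    then have "(\<lambda>i. if i = k then md k (mmul (h k) (sc (2^j))) else mzero) = (\<lambda>k. mzero)" unfolding ye R0_simps by simp
    then have "md k (mmul (h k) (sc (2^j))) = mzero" by (metis (mono_tags))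
    then show False using nz by simp
  qed
  show "\<exists>x\<in>ring_center R0. \<exists>y\<in>ring_center R0. x \<noteq> \<zero>\<^bsub>R0\<^esub> \<and> y \<noteq> \<zero>\<^bsub>R0\<^esub> \<and> a \<otimes>\<^bsub>R0\<^esub> x = y"
    using xcent ycent xne yne y_def by blast
qed



lemma three_lemma: assumes "\<not> (3::int) dvd a" shows "3 dvd (1 - 4*a*a)"
proof -
  define r where "r = a mod 3"
  define q where "q = a div 3"
  have a: "a = 3*q + r" unfolding r_def q_def by simp
  have "r = 1 \<or> r = 2" using assms unfolding r_def by (auto simp: dvd_eq_mod_eq_0) 
  then show ?thesis
  proof
    assume r: "r = 1"
    have e: "1 - 4*a*a = 3 * (-12*q*q - 8*q - 1)" unfolding a r by (simp add: algebra_simps)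
    show ?thesis unfolding e by simp
  next
    assume r: "r = 2"
    have e: "1 - 4*a*a = 3 * (-12*q*q - 16*q - 5)" unfolding a r by (simp add: algebra_simps)
    show ?thesis unfolding e by simp
  qed
qed

lemma R0_aclosed: "x \<in> carr \<Longrightarrow> y \<in> carr \<Longrightarrow> x \<oplus>\<^bsub>R0\<^esub> y \<in> carr"
  by (cases x; cases y) (simp add: R0_simps carr_add)
lemma R0_aassoc: "(x \<oplus>\<^bsub>R0\<^esub> y) \<oplus>\<^bsub>R0\<^esub> z = x \<oplus>\<^bsub>R0\<^esub> (y \<oplus>\<^bsub>R0\<^esub> z)"
  by (cases x; cases y; cases z) (simp add: R0_simps madd_assoc)
lemma R0_rzero: "x \<in> carr \<Longrightarrow> x \<oplus>\<^bsub>R0\<^esub> \<zero>\<^bsub>R0\<^esub> = x"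
  by (cases x) (auto simp: R0_simps carr_def)
lemma R0_lone: "x \<in> carr \<Longrightarrow> \<one>\<^bsub>R0\<^esub> \<otimes>\<^bsub>R0\<^esub> x = x"
  by (cases x) (auto simp: R0_simps carr_def)

fun row1z :: "m2 \<Rightarrow> bool" where "row1z (M a b c d) = ((3::int) dvd a \<and> 3 dvd b)"

definition I0 :: "elt set" where "I0 = {x \<in> carr. row1z (fst x)}"

definition cst :: "m2 \<Rightarrow> elt" where "cst X = (X, \<lambda>k. md k X)"
lemma cst_carr: "scal2 X \<Longrightarrow> cst X \<in> carr"
  by (simp add: cst_def carr_def scal2_md)

definition negE :: "elt \<Rightarrow> elt" where "negE x = (mneg (fst x), \<lambda>k. md k (mneg (snd x k)))"

lemma negE_carr: "x \<in> carr \<Longrightarrow> negE x \<in> carr"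
  by (cases x) (simp add: negE_def carr_neg)
lemma negE_l: "negE x \<oplus>\<^bsub>R0\<^esub> x = \<zero>\<^bsub>R0\<^esub>"
  by (cases x) (simp add: negE_def R0_simps madd_neg)
lemma a_inv_R0: "x \<in> carr \<Longrightarrow> \<ominus>\<^bsub>R0\<^esub> x = negE x"
  using abelian_group.minus_equality[OF ring.is_abelian_group[OF ring_R0] negE_l[of x]]
  by (simp add: R0_simps negE_carr)

lemma row1z_add: "row1z X \<Longrightarrow> row1z Y \<Longrightarrow> row1z (madd X Y)"
  by (cases X; cases Y) auto
lemma row1z_neg: "row1z X \<Longrightarrow> row1z (mneg X)"
  by (cases X) auto
lemma row1z_mul: "row1z X \<Longrightarrow> row1z (mmul X Y)"
  by (cases X; cases Y) auto

lemma addsub_I0: "additive_subgroup I0 R0"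
proof (rule additive_subgroup.intro, rule subgroup.intro)
  show "I0 \<subseteq> carrier (add_monoid R0)" by (auto simp: I0_def R0_simps)
next
  fix x y assume "x \<in> I0" "y \<in> I0"
  then show "x \<otimes>\<^bsub>add_monoid R0\<^esub> y \<in> I0"
    by (cases x; cases y) (auto simp: I0_def R0_simps carr_add row1z_add)
next
  show "\<one>\<^bsub>add_monoid R0\<^esub> \<in> I0" using carr_zero by (simp add: I0_def R0_simps mzero_def)
next
  fix x assume x: "x \<in> I0"
  then have "x \<in> carr" by (simp add: I0_def)
  have "inv\<^bsub>add_monoid R0\<^esub> x = \<ominus>\<^bsub>R0\<^esub> x" by (simp add: a_inv_def)
  also have "\<dots> = negE x" using a_inv_R0[OF \<open>x \<in> carr\<close>] .
  finally show "inv\<^bsub>add_monoid R0\<^esub> x \<in> I0"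
    using x negE_carr by (auto simp: I0_def negE_def row1z_neg)
qed

lemma right_ideal_I0: "right_ideal I0 R0"
  unfolding right_ideal_def
proof (intro conjI ballI addsub_I0)
  fix a r assume "a \<in> I0" "r \<in> carrier R0"
  then show "a \<otimes>\<^bsub>R0\<^esub> r \<in> I0"
    by (cases a; cases r) (auto simp: I0_def R0_simps carr_mult row1z_mul)
qed

lemma not_ideal_I0: "\<not> ideal I0 R0"
proof
  assume id: "ideal I0 R0"
  have s: "cst (M 0 4 0 0) \<in> carrier R0" by (simp add: R0_simps cst_carr)
  have i: "cst (M 0 0 4 0) \<in> I0" using cst_carr[of "M 0 0 4 0"] by (simp add: I0_def cst_def)
  have "cst (M 0 4 0 0) \<otimes>\<^bsub>R0\<^esub> cst (M 0 0 4 0) \<in> I0"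
    using ideal.I_l_closed[OF id i s] .
  then show False by (simp add: I0_def cst_def R0_simps)
qed

lemma max_I0: "maximal_right_ideal I0 R0"
  unfolding maximal_right_ideal_def
proof (intro conjI allI impI right_ideal_I0)
  show "I0 \<noteq> carrier R0"
  proof
    assume "I0 = carrier R0"
    then have "\<one>\<^bsub>R0\<^esub> \<in> I0" using carr_one by (simp add: R0_simps)
    then show False by (simp add: I0_def R0_simps mone_def)
  qed
next
  fix J assume JJ: "right_ideal J R0 \<and> I0 \<subseteq> J"
  then have rJ: "right_ideal J R0" and IJ: "I0 \<subseteq> J" by auto
  have asJ: "additive_subgroup J R0" using rJ by (simp add: right_ideal_def)
  have Jsub: "J \<subseteq> carr" using additive_subgroup.a_subset[OF asJ] by (simp add: R0_simps)
  have Jr: "\<And>a r. a \<in> J \<Longrightarrow> r \<in> carr \<Longrightarrow> a \<otimes>\<^bsub>R0\<^esub> r \<in> J"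
    using rJ unfolding right_ideal_def R0_simps by blast
  show "J = I0 \<or> J = carrier R0"
  proof (cases "J = I0")
    case True then show ?thesis by simp
  next
    case False
    then obtain r where rJ': "r \<in> J" and rnI: "r \<notin> I0" using IJ by blast
    obtain A h where re: "r = (A,h)" by (cases r)
    have rc: "(A,h) \<in> carr" using rJ' re Jsub by auto
    obtain a b c d where Ae: "A = M a b c d" by (cases A)
    have nrow: "\<not> (3 dvd a \<and> 3 dvd b)" using rnI rc re Ae by (simp add: I0_def)
    obtain N where sN: "scal2 N" and rowN: "row1z (madd mone (mneg (mmul A N)))"
    proof (cases "3 dvd a")
      case False
      have "scal2 (M (4*a) 0 0 0)" by simp
      moreover have "row1z (madd mone (mneg (mmul A (M (4*a) 0 0 0))))"
      proof -
        have e: "1 + - (a*(4*a) + b*0) = 1 - 4*a*a" by simp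
        show ?thesis using three_lemma[OF False] unfolding Ae mone_def mmul.simps mneg.simps madd.simps row1z.simps e
          by simp
      qed
      ultimately show ?thesis using that by blast
    next
      case True
      then have nb: "\<not> 3 dvd b" using nrow by simp
      have "scal2 (M 0 0 (4*b) 0)" by simp
      moreover have "row1z (madd mone (mneg (mmul A (M 0 0 (4*b) 0))))"
      proof -
        have e: "1 + - (a*0 + b*(4*b)) = 1 - 4*b*b" by simp
        show ?thesis using three_lemma[OF nb] unfolding Ae mone_def mmul.simps mneg.simps madd.simps row1z.simps e
          by simp
      qed
      ultimately show ?thesis using that by blast
    qed
    define w where "w = r \<otimes>\<^bsub>R0\<^esub> cst N"
    have wJ: "w \<in> J" unfolding w_def using Jr[OF rJ' cst_carr[OF sN]] .
    have wc: "w \<in> carr" using wJ Jsub by auto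
    define t where "t = \<one>\<^bsub>R0\<^esub> \<oplus>\<^bsub>R0\<^esub> negE w"
    have tc: "t \<in> carr" unfolding t_def using carr_one negE_carr[OF wc] R0_aclosed R0_simps(4) by metis
    have "fst t = madd mone (mneg (fst w))"
      unfolding t_def negE_def R0_simps(4) by (simp only: R0_simps fst_conv)
    moreover have "fst w = mmul A N" unfolding w_def re cst_def R0_simps by simp
    ultimately have "fst t = madd mone (mneg (mmul A N))" by simp
    then have tI: "t \<in> I0" using tc rowN by (simp add: I0_def)
    have "t \<oplus>\<^bsub>R0\<^esub> w = \<one>\<^bsub>R0\<^esub>"
    proof -
      have "t \<oplus>\<^bsub>R0\<^esub> w = \<one>\<^bsub>R0\<^esub> \<oplus>\<^bsub>R0\<^esub> (negE w \<oplus>\<^bsub>R0\<^esub> w)"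
        unfolding t_def by (rule R0_aassoc)
      also have "\<dots> = \<one>\<^bsub>R0\<^esub>" unfolding negE_l using R0_rzero carr_one
        by (simp add: R0_simps(4))
      finally show ?thesis .
    qed
    moreover have "t \<oplus>\<^bsub>R0\<^esub> w \<in> J" using additive_subgroup.a_closed[OF asJ] tI IJ wJ by blast
    ultimately have oneJ: "\<one>\<^bsub>R0\<^esub> \<in> J" by simp
    have "carr \<subseteq> J"
    proof
      fix z assume "z \<in> carr"
      then have "\<one>\<^bsub>R0\<^esub> \<otimes>\<^bsub>R0\<^esub> z \<in> J" using Jr[OF oneJ] by blast
      moreover have "\<one>\<^bsub>R0\<^esub> \<otimes>\<^bsub>R0\<^esub> z = z" using \<open>z \<in> carr\<close> by (rule R0_lone)
      ultimately show "z \<in> J" by simp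
    qed
    then show ?thesis using Jsub by (simp add: R0_simps)
  qed
qed



instance m2 :: countable by countable_datatype

definition enc :: "m2 \<times> m2 list \<Rightarrow> elt" where
  "enc p = (fst p, \<lambda>k. if k < length (snd p) then snd p ! k else md k (fst p))"

lemma countable_carr: "countable carr"
proof -
  have "carr \<subseteq> range enc"
  proof
    fix x assume x: "x \<in> carr"
    obtain A h where xe: "x = (A,h)" by (cases x)
    have fin: "finite {k. h k \<noteq> md k A}" using x xe carr_fin by simp
    then obtain n where n: "\<forall>k\<in>{k. h k \<noteq> md k A}. k < n" using finite_nat_set_iff_bounded by blast
    have "enc (A, map h [0..<n]) = (A,h)"
    proof -
      have "(if k < n then h k else md k A) = h k" for k
      proof (cases "k < n")
        case False
        then have "\<not> (h k \<noteq> md k A)" using n by blast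
        then show ?thesis using False by simp
      qed simp
      then have "(\<lambda>k. if k < n then h k else md k A) = h" by (rule ext)
      moreover have "enc (A, map h [0..<n]) = (A, \<lambda>k. if k < n then h k else md k A)"
        unfolding enc_def by (auto intro!: ext)
      ultimately show ?thesis by simp
    qed
    then show "x \<in> range enc" using xe by (metis rangeI)
  qed
  then show ?thesis by (rule countable_subset) simp
qed

lemma infinite_carr: "infinite carr"
proof
  assume fin: "finite carr"
  have i: "inj (\<lambda>n::nat. cst (sc (2 * int n)))" by (auto simp: inj_def cst_def sc_def)
  have "range (\<lambda>n::nat. cst (sc (2 * int n))) \<subseteq> carr" using cst_carr scal2_sc by auto
  then have "finite (range (\<lambda>n::nat. cst (sc (2 * int n))))"
    using fin by (rule finite_subset)
  then have "finite (UNIV :: nat set)" using i by (rule finite_imageD)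
  then show False by simp
qed

definition ff :: "elt \<Rightarrow> nat" where "ff = to_nat_on carr"
definition gg :: "nat \<Rightarrow> elt" where "gg = from_nat_into carr"

lemma gg_in[simp]: "gg n \<in> carr"
proof -
  have "carr \<noteq> {}" using infinite_carr by auto
  then show ?thesis unfolding gg_def by (rule from_nat_into)
qed
lemma gg_ff[simp]: "x \<in> carr \<Longrightarrow> gg (ff x) = x"
  unfolding gg_def ff_def using countable_carr by simp
lemma ff_gg[simp]: "ff (gg n) = n"
  unfolding gg_def ff_def using countable_carr infinite_carr by simp
lemma gg_inj: "gg m = gg n \<longleftrightarrow> m = n"
proof
  assume "gg m = gg n"
  then have "ff (gg m) = ff (gg n)" by simp
  then show "m = n" by simp
qed simp
lemma ff_inj: "x \<in> carr \<Longrightarrow> y \<in> carr \<Longrightarrow> ff x = ff y \<longleftrightarrow> x = y"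
proof
  assume "x \<in> carr" "y \<in> carr" "ff x = ff y"
  then have "gg (ff x) = gg (ff y)" by simp
  then show "x = y" using \<open>x \<in> carr\<close> \<open>y \<in> carr\<close> by simp
qed simp

definition T :: "nat ring" where
 "T = \<lparr>carrier = UNIV, mult = (\<lambda>x y. ff (gg x \<otimes>\<^bsub>R0\<^esub> gg y)), one = ff \<one>\<^bsub>R0\<^esub>,
       zero = ff \<zero>\<^bsub>R0\<^esub>, add = (\<lambda>x y. ff (gg x \<oplus>\<^bsub>R0\<^esub> gg y))\<rparr>"

lemma T_simps: "carrier T = UNIV" "x \<otimes>\<^bsub>T\<^esub> y = ff (gg x \<otimes>\<^bsub>R0\<^esub> gg y)"
  "x \<oplus>\<^bsub>T\<^esub> y = ff (gg x \<oplus>\<^bsub>R0\<^esub> gg y)" "\<one>\<^bsub>T\<^esub> = ff \<one>\<^bsub>R0\<^esub>" "\<zero>\<^bsub>T\<^esub> = ff \<zero>\<^bsub>R0\<^esub>"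
  by (simp_all add: T_def)

lemma mclosed: "x \<in> carr \<Longrightarrow> y \<in> carr \<Longrightarrow> x \<otimes>\<^bsub>R0\<^esub> y \<in> carr"
  by (cases x; cases y) (simp add: R0_simps carr_mult)

lemma one_carr: "\<one>\<^bsub>R0\<^esub> \<in> carr" by (simp add: R0_simps carr_one)
lemma zero_carr: "\<zero>\<^bsub>R0\<^esub> \<in> carr" by (simp add: R0_simps carr_zero)

lemma gg_T[simp]: "gg (x \<otimes>\<^bsub>T\<^esub> y) = gg x \<otimes>\<^bsub>R0\<^esub> gg y" "gg (x \<oplus>\<^bsub>T\<^esub> y) = gg x \<oplus>\<^bsub>R0\<^esub> gg y"
  "gg \<one>\<^bsub>T\<^esub> = \<one>\<^bsub>R0\<^esub>" "gg \<zero>\<^bsub>T\<^esub> = \<zero>\<^bsub>R0\<^esub>"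
  by (simp_all add: T_simps mclosed R0_aclosed one_carr zero_carr)

lemma eqT: "x = y \<longleftrightarrow> gg x = gg y" by (simp add: gg_inj)

lemma ring_T: "ring T"
proof -
  interpret R: ring R0 by (rule ring_R0)
  have c: "\<And>n. gg n \<in> carrier R0" by (simp add: R0_simps)
  show ?thesis
  proof (rule ringI)
    show "abelian_group T"
    proof (rule abelian_groupI)
      fix x y z
      show "x \<oplus>\<^bsub>T\<^esub> y \<in> carrier T" by (simp add: T_simps)
      show "\<zero>\<^bsub>T\<^esub> \<in> carrier T" by (simp add: T_simps)
      show "(x \<oplus>\<^bsub>T\<^esub> y) \<oplus>\<^bsub>T\<^esub> z = x \<oplus>\<^bsub>T\<^esub> (y \<oplus>\<^bsub>T\<^esub> z)"
        unfolding eqT gg_T using R.a_assoc[OF c c c] .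
      show "x \<oplus>\<^bsub>T\<^esub> y = y \<oplus>\<^bsub>T\<^esub> x"
        unfolding eqT gg_T using R.a_comm[OF c c] .
      show "\<zero>\<^bsub>T\<^esub> \<oplus>\<^bsub>T\<^esub> x = x"
        unfolding eqT gg_T using R.l_zero[OF c] .
      have "ff (\<ominus>\<^bsub>R0\<^esub> gg x) \<oplus>\<^bsub>T\<^esub> x = \<zero>\<^bsub>T\<^esub>"
      proof -
        have i: "\<ominus>\<^bsub>R0\<^esub> gg x \<in> carr" using R.a_inv_closed[OF c] by (simp add: R0_simps)
        show ?thesis unfolding eqT gg_T gg_ff[OF i] using R.l_neg[OF c] .
      qed
      then show "\<exists>y\<in>carrier T. y \<oplus>\<^bsub>T\<^esub> x = \<zero>\<^bsub>T\<^esub>" by (auto simp: T_simps(1))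
    qed
  next
    show "monoid T"
    proof (rule monoidI)
      fix x y z
      show "x \<otimes>\<^bsub>T\<^esub> y \<in> carrier T" by (simp add: T_simps)
      show "\<one>\<^bsub>T\<^esub> \<in> carrier T" by (simp add: T_simps)
      show "(x \<otimes>\<^bsub>T\<^esub> y) \<otimes>\<^bsub>T\<^esub> z = x \<otimes>\<^bsub>T\<^esub> (y \<otimes>\<^bsub>T\<^esub> z)"
        unfolding eqT gg_T using R.m_assoc[OF c c c] .
      show "\<one>\<^bsub>T\<^esub> \<otimes>\<^bsub>T\<^esub> x = x" unfolding eqT gg_T using R.l_one[OF c] .
      show "x \<otimes>\<^bsub>T\<^esub> \<one>\<^bsub>T\<^esub> = x" unfolding eqT gg_T using R.r_one[OF c] .
    qed
  next
    fix x y z show "(x \<oplus>\<^bsub>T\<^esub> y) \<otimes>\<^bsub>T\<^esub> z = x \<otimes>\<^bsub>T\<^esub> z \<oplus>\<^bsub>T\<^esub> y \<otimes>\<^bsub>T\<^esub> z"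
      unfolding eqT gg_T using R.l_distr[OF c c c] .
  next
    fix x y z show "z \<otimes>\<^bsub>T\<^esub> (x \<oplus>\<^bsub>T\<^esub> y) = z \<otimes>\<^bsub>T\<^esub> x \<oplus>\<^bsub>T\<^esub> z \<otimes>\<^bsub>T\<^esub> y"
      unfolding eqT gg_T using R.r_distr[OF c c c] .
  qed
qed



lemma center_T: assumes "gg z \<in> ring_center R0" shows "z \<in> ring_center T"
proof -
  have "\<forall>a\<in>carr. gg z \<otimes>\<^bsub>R0\<^esub> a = a \<otimes>\<^bsub>R0\<^esub> gg z" using assms by (simp add: ring_center_def R0_simps)
  then have "\<forall>b. z \<otimes>\<^bsub>T\<^esub> b = b \<otimes>\<^bsub>T\<^esub> z" unfolding eqT gg_T by simp
  then show ?thesis by (simp add: ring_center_def T_simps(1))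
qed

lemma CE_T: "centrally_essential T"
  unfolding centrally_essential_def
proof (intro conjI disjI2 ballI impI)
  show "ring T" by (rule ring_T)
next
  fix a assume "a \<in> carrier T" and nc: "a \<notin> ring_center T"
  have nc': "gg a \<notin> ring_center R0" using nc center_T by blast
  have ga: "gg a \<in> carrier R0" by (simp add: R0_simps)
  have H: "(\<forall>a\<in>carrier R0. \<forall>b\<in>carrier R0. a \<otimes>\<^bsub>R0\<^esub> b = b \<otimes>\<^bsub>R0\<^esub> a) \<or>
      (\<forall>a\<in>carrier R0. a \<notin> ring_center R0 \<longrightarrow>
         (\<exists>x \<in> ring_center R0. \<exists>y \<in> ring_center R0.
            x \<noteq> \<zero>\<^bsub>R0\<^esub> \<and> y \<noteq> \<zero>\<^bsub>R0\<^esub> \<and> a \<otimes>\<^bsub>R0\<^esub> x = y))"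
    using CE_R0 unfolding centrally_essential_def by blast
  have "\<exists>x \<in> ring_center R0. \<exists>y \<in> ring_center R0.
            x \<noteq> \<zero>\<^bsub>R0\<^esub> \<and> y \<noteq> \<zero>\<^bsub>R0\<^esub> \<and> gg a \<otimes>\<^bsub>R0\<^esub> x = y"
  proof (cases "\<forall>a\<in>carrier R0. \<forall>b\<in>carrier R0. a \<otimes>\<^bsub>R0\<^esub> b = b \<otimes>\<^bsub>R0\<^esub> a")
    case True
    then have "gg a \<in> ring_center R0" using ga unfolding ring_center_def by blast
    then show ?thesis using nc' by blast
  next
    case False
    then show ?thesis using H nc' ga by blast
  qed
  then obtain x y where x: "x \<in> ring_center R0" and y: "y \<in> ring_center R0"
    and xn: "x \<noteq> \<zero>\<^bsub>R0\<^esub>" and yn: "y \<noteq> \<zero>\<^bsub>R0\<^esub>" and axy: "gg a \<otimes>\<^bsub>R0\<^esub> x = y"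
    by blast
  have xc: "x \<in> carr" and yc: "y \<in> carr" using x y by (auto simp: ring_center_def R0_simps)
  have "ff x \<in> ring_center T" using center_T[of "ff x"] x xc by simp
  moreover have "ff y \<in> ring_center T" using center_T[of "ff y"] y yc by simp
  moreover have "ff x \<noteq> \<zero>\<^bsub>T\<^esub>" using xn ff_inj[OF xc zero_carr] by (simp add: T_simps)
  moreover have "ff y \<noteq> \<zero>\<^bsub>T\<^esub>" using yn ff_inj[OF yc zero_carr] by (simp add: T_simps)
  moreover have "a \<otimes>\<^bsub>T\<^esub> ff x = ff y" using axy xc by (simp add: T_simps)
  ultimately show "\<exists>x\<in>ring_center T. \<exists>y\<in>ring_center T. x \<noteq> \<zero>\<^bsub>T\<^esub> \<and> y \<noteq> \<zero>\<^bsub>T\<^esub> \<and> a \<otimes>\<^bsub>T\<^esub> x = y"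
    by blast
qed

lemma addsubI:
  assumes "H \<subseteq> carrier R" "\<zero>\<^bsub>R\<^esub> \<in> H" "\<And>x y. x \<in> H \<Longrightarrow> y \<in> H \<Longrightarrow> x \<oplus>\<^bsub>R\<^esub> y \<in> H"
    "\<And>x. x \<in> H \<Longrightarrow> \<ominus>\<^bsub>R\<^esub> x \<in> H"
  shows "additive_subgroup H R"
proof (rule additive_subgroup.intro, rule subgroup.intro)
  show "H \<subseteq> carrier (add_monoid R)" using assms(1) by simp
  show "\<And>x y. x \<in> H \<Longrightarrow> y \<in> H \<Longrightarrow> x \<otimes>\<^bsub>add_monoid R\<^esub> y \<in> H" using assms(3) by simp
  show "\<one>\<^bsub>add_monoid R\<^esub> \<in> H" using assms(2) by simp
  show "\<And>x. x \<in> H \<Longrightarrow> inv\<^bsub>add_monoid R\<^esub> x \<in> H" using assms(4) by (simp add: a_inv_def)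
qed

lemma neg_T: "\<ominus>\<^bsub>T\<^esub> x = ff (\<ominus>\<^bsub>R0\<^esub> gg x)"
proof -
  interpret R: ring R0 by (rule ring_R0)
  interpret S: ring T by (rule ring_T)
  have i: "\<ominus>\<^bsub>R0\<^esub> gg x \<in> carr" using R.a_inv_closed[of "gg x"] by (simp add: R0_simps)
  have "ff (\<ominus>\<^bsub>R0\<^esub> gg x) \<oplus>\<^bsub>T\<^esub> x = \<zero>\<^bsub>T\<^esub>"
    unfolding eqT gg_T gg_ff[OF i] using R.l_neg[of "gg x"] by (simp add: R0_simps)
  then show ?thesis using S.minus_equality by (simp add: T_simps)
qed

lemma gg_neg: "gg (\<ominus>\<^bsub>T\<^esub> x) = \<ominus>\<^bsub>R0\<^esub> gg x"
proof -
  interpret R: ring R0 by (rule ring_R0)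
  have i: "\<ominus>\<^bsub>R0\<^esub> gg x \<in> carr" using R.a_inv_closed[of "gg x"] by (simp add: R0_simps)
  show ?thesis unfolding neg_T using i by simp
qed

lemma rideal_ff: assumes "right_ideal J R0" shows "right_ideal (ff ` J) T"
proof -
  have as: "additive_subgroup J R0" and rc: "\<forall>a\<in>J. \<forall>r\<in>carrier R0. a \<otimes>\<^bsub>R0\<^esub> r \<in> J"
    using assms by (auto simp: right_ideal_def)
  have Jc: "J \<subseteq> carr" using additive_subgroup.a_subset[OF as] by (simp add: R0_simps)
  have "additive_subgroup (ff ` J) T"
  proof (rule addsubI)
    show "ff ` J \<subseteq> carrier T" by (simp add: T_simps)
    show "\<zero>\<^bsub>T\<^esub> \<in> ff ` J" using additive_subgroup.zero_closed[OF as] by (simp add: T_simps)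
  next
    fix x y assume "x \<in> ff ` J" "y \<in> ff ` J"
    then obtain u v where u: "u \<in> J" "x = ff u" and v: "v \<in> J" "y = ff v" by blast
    have "u \<in> carr" "v \<in> carr" using u v Jc by auto
    then have "x \<oplus>\<^bsub>T\<^esub> y = ff (u \<oplus>\<^bsub>R0\<^esub> v)" using u v by (simp add: T_simps)
    then show "x \<oplus>\<^bsub>T\<^esub> y \<in> ff ` J" using additive_subgroup.a_closed[OF as u(1) v(1)] by simp
  next
    fix x assume "x \<in> ff ` J"
    then obtain u where u: "u \<in> J" "x = ff u" by blast
    have "u \<in> carr" using u Jc by auto
    then have "\<ominus>\<^bsub>T\<^esub> x = ff (\<ominus>\<^bsub>R0\<^esub> u)" using u by (simp add: neg_T)
    then show "\<ominus>\<^bsub>T\<^esub> x \<in> ff ` J" using additive_subgroup.a_inv_closed[OF as u(1)] by simp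
  qed
  moreover have "\<forall>a\<in>ff ` J. \<forall>r\<in>carrier T. a \<otimes>\<^bsub>T\<^esub> r \<in> ff ` J"
  proof (intro ballI)
    fix a r assume "a \<in> ff ` J" "r \<in> carrier T"
    then obtain u where u: "u \<in> J" "a = ff u" by blast
    have "u \<in> carr" using u Jc by auto
    then have "a \<otimes>\<^bsub>T\<^esub> r = ff (u \<otimes>\<^bsub>R0\<^esub> gg r)" using u by (simp add: T_simps)
    moreover have "u \<otimes>\<^bsub>R0\<^esub> gg r \<in> J" using rc u(1) by (simp add: R0_simps)
    ultimately show "a \<otimes>\<^bsub>T\<^esub> r \<in> ff ` J" by simp
  qed
  ultimately show ?thesis by (simp add: right_ideal_def)
qed

lemma rideal_gg: assumes "right_ideal J T" shows "right_ideal (gg ` J) R0"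
proof -
  have as: "additive_subgroup J T" and rc: "\<forall>a\<in>J. \<forall>r\<in>carrier T. a \<otimes>\<^bsub>T\<^esub> r \<in> J"
    using assms by (auto simp: right_ideal_def)
  have "additive_subgroup (gg ` J) R0"
  proof (rule addsubI)
    show "gg ` J \<subseteq> carrier R0" by (auto simp: R0_simps)
    have X: "gg \<zero>\<^bsub>T\<^esub> \<in> gg ` J" using additive_subgroup.zero_closed[OF as] by (rule imageI)
    show "\<zero>\<^bsub>R0\<^esub> \<in> gg ` J" using X unfolding gg_T(4) .
  next
    fix x y assume "x \<in> gg ` J" "y \<in> gg ` J"
    then obtain u v where u: "u \<in> J" "x = gg u" and v: "v \<in> J" "y = gg v" by blast
    have X: "gg (u \<oplus>\<^bsub>T\<^esub> v) \<in> gg ` J" using additive_subgroup.a_closed[OF as u(1) v(1)] by (rule imageI)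
    show "x \<oplus>\<^bsub>R0\<^esub> y \<in> gg ` J" using X unfolding gg_T(2) u(2) v(2) .
  next
    fix x assume "x \<in> gg ` J"
    then obtain u where u: "u \<in> J" "x = gg u" by blast
    have X: "gg (\<ominus>\<^bsub>T\<^esub> u) \<in> gg ` J" using additive_subgroup.a_inv_closed[OF as u(1)] by (rule imageI)
    show "\<ominus>\<^bsub>R0\<^esub> x \<in> gg ` J" using X unfolding gg_neg u(2) .
  qed
  moreover have "\<forall>a\<in>gg ` J. \<forall>r\<in>carrier R0. a \<otimes>\<^bsub>R0\<^esub> r \<in> gg ` J"
  proof (intro ballI)
    fix a r assume "a \<in> gg ` J" "r \<in> carrier R0"
    then obtain u where u: "u \<in> J" "a = gg u" and r: "r \<in> carr" by (auto simp: R0_simps)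
    have "u \<otimes>\<^bsub>T\<^esub> ff r \<in> J" using rc u(1) by (simp add: T_simps(1))
    then have X: "gg (u \<otimes>\<^bsub>T\<^esub> ff r) \<in> gg ` J" by (rule imageI)
    show "a \<otimes>\<^bsub>R0\<^esub> r \<in> gg ` J" using X unfolding gg_T(1) gg_ff[OF r] u(2) .
  qed
  ultimately show ?thesis by (simp add: right_ideal_def)
qed

lemma ff_gg_image: "ff ` gg ` J = J"
  by (simp add: image_image)

lemma ff_carr: "ff ` carr = UNIV"
proof -
  have "n \<in> ff ` carr" for n using ff_gg[of n] gg_in[of n] by (metis image_eqI)
  then show ?thesis by blast
qed

lemma mx: "right_ideal I0 R0" "I0 \<noteq> carr"
    "\<And>J. right_ideal J R0 \<and> I0 \<subseteq> J \<Longrightarrow> J = I0 \<or> J = carr"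
  using max_I0 unfolding maximal_right_ideal_def R0_simps by blast+
lemma Ic: "I0 \<subseteq> carr" by (auto simp: I0_def)

lemma max_T: "maximal_right_ideal (ff ` I0) T"
  unfolding maximal_right_ideal_def
proof (intro conjI allI impI)
  show "right_ideal (ff ` I0) T" by (rule rideal_ff[OF mx(1)])
  show "ff ` I0 \<noteq> carrier T"
  proof
    assume "ff ` I0 = carrier T"
    have "carr \<subseteq> I0"
    proof
      fix z assume z: "z \<in> carr"
      then have "ff z \<in> ff ` I0" using \<open>ff ` I0 = carrier T\<close> by (simp add: T_simps)
      then obtain w where w: "w \<in> I0" "ff z = ff w" by blast
      have wc: "w \<in> carr" using w Ic by auto
      have "z = w" using ff_inj[OF z wc] w(2) by simp
      then show "z \<in> I0" using w(1) by simp
    qed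
    then show False using mx(2) Ic by blast
  qed
next
  fix J assume JJ: "right_ideal J T \<and> ff ` I0 \<subseteq> J"
  have r: "right_ideal (gg ` J) R0" using rideal_gg JJ by blast
  have "I0 \<subseteq> gg ` J"
  proof
    fix z assume z: "z \<in> I0"
    then have "ff z \<in> J" using JJ by blast
    moreover have "z = gg (ff z)" using z Ic by auto
    ultimately show "z \<in> gg ` J" by blast
  qed
  then have "gg ` J = I0 \<or> gg ` J = carr" using mx(3) r by blast
  then show "J = ff ` I0 \<or> J = carrier T"
  proof
    assume "gg ` J = I0"
    then have "ff ` gg ` J = ff ` I0" by simp
    then show ?thesis by (simp add: image_image)
  next
    assume "gg ` J = carr"
    then have "ff ` gg ` J = ff ` carr" by simp
    then show ?thesis by (simp add: image_image ff_carr T_simps)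
  qed
qed

lemma not_ideal_T: "\<not> ideal (ff ` I0) T"
proof
  assume id: "ideal (ff ` I0) T"
  have sc: "cst (M 0 4 0 0) \<in> carr" by (simp add: cst_carr)
  have ic: "cst (M 0 0 4 0) \<in> carr" by (simp add: cst_carr)
  have i: "cst (M 0 0 4 0) \<in> I0" using ic by (simp add: I0_def cst_def)
  have "ff (cst (M 0 4 0 0)) \<otimes>\<^bsub>T\<^esub> ff (cst (M 0 0 4 0)) \<in> ff ` I0"
    using ideal.I_l_closed[OF id, of "ff (cst (M 0 0 4 0))" "ff (cst (M 0 4 0 0))"] i by (simp add: T_simps(1))
  then have "ff (cst (M 0 4 0 0) \<otimes>\<^bsub>R0\<^esub> cst (M 0 0 4 0)) \<in> ff ` I0"
    using sc ic by (simp add: T_simps(2))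
  then obtain w where w: "w \<in> I0" "ff (cst (M 0 4 0 0) \<otimes>\<^bsub>R0\<^esub> cst (M 0 0 4 0)) = ff w" by blast
  have pc: "cst (M 0 4 0 0) \<otimes>\<^bsub>R0\<^esub> cst (M 0 0 4 0) \<in> carr" using mclosed sc ic by blast
  have wc: "w \<in> carr" using w(1) by (simp add: I0_def)
  have "cst (M 0 4 0 0) \<otimes>\<^bsub>R0\<^esub> cst (M 0 0 4 0) = w" using ff_inj[OF pc wc] w(2) by simp
  then have "cst (M 0 4 0 0) \<otimes>\<^bsub>R0\<^esub> cst (M 0 0 4 0) \<in> I0" using w by simp
  then show False by (simp add: I0_def cst_def R0_simps)
qed

lemma one_ne_zero_T: "\<one>\<^bsub>T\<^esub> \<noteq> \<zero>\<^bsub>T\<^esub>"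
proof -
  have "\<one>\<^bsub>R0\<^esub> \<noteq> \<zero>\<^bsub>R0\<^esub>" by (simp add: R0_simps mone_def mzero_def)
  then show ?thesis using ff_inj[OF one_carr zero_carr] by (simp add: T_simps)
qed

theorem theorem1p4:
  shows "\<exists>(R :: nat ring) I. ring R \<and> \<one>\<^bsub>R\<^esub> \<noteq> \<zero>\<^bsub>R\<^esub> \<and>
           centrally_essential R \<and> maximal_right_ideal I R \<and> \<not> ideal I R"
  using ring_T one_ne_zero_T CE_T max_T not_ideal_T by blast


end
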